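(* Let $n\in\mathbb{N}$, $A,V\in\mathbb{C}^{n\times n}$ with $V$ invertible, $0\le\rho\in L^1(\mathbb{R})\cap L^\infty(\mathbb{R})$ and $s\in(0,1)$. Then for all $\lambda>0$, \[ \int_{\mathbb{R}}|\det(A+rV)|^{-s/n}\rho(r)\,dr\le|\det V|^{-s/n}\|\rho\|_{L^1}^{1-s}\|\rho\|_\infty^{s}\frac{2^s s^{-s}}{1-s}\le|\det V|^{-s/n}\Bigl(\lambda^{-s}\|\rho\|_{L^1}+\frac{2\lambda^{1-s}}{1-s}\|\rho\|_\infty\Bigr). \] *)

theory Defs
  imports "HOL-Analysis.Analysis" "HOL-Probability.Essential_Supremum"
begin

definition linf_norm :: "(real \<Rightarrow> real) \<Rightarrow> real" where
  "linf_norm f = real_of_ereal (esssup lborel (\<lambda>x. ereal \<bar>f x\<bar>))"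

definition l1_norm :: "(real \<Rightarrow> real) \<Rightarrow> real" where
  "l1_norm f = (\<integral>x. \<bar>f x\<bar> \<partial>lborel)"

end

theory Submission
  imports Defs "HOL-Computational_Algebra.Fundamental_Theorem_Algebra"
begin

lemma int_sing0:
  fixes s t :: real
  assumes s: "0 < s" "s < 1" and t: "0 < t"
  shows "(\<integral>\<^sup>+ x. ennreal (indicator {-t..t} x * \<bar>x\<bar> powr (-s)) \<partial>lborel)
         = ennreal (2 * t powr (1 - s) / (1 - s))"
proof -
  have h1: "((\<lambda>x. x powr (-s)) has_integral (t powr (1 - s) / (1 - s))) {0..t}"
    using has_integral_powr_from_0[of "-s" t] s t by simp
  hence h1': "((\<lambda>x. \<bar>x\<bar> powr (-s)) has_integral (t powr (1 - s) / (1 - s))) {0..t}"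
    by (rule has_integral_eq[rotated]) auto
  have "((\<lambda>x. (-x) powr (-s)) has_integral (t powr (1 - s) / (1 - s))) {-t..-0}"
    using h1 by (subst has_integral_reflect_real) 
  hence "((\<lambda>x. (-x) powr (-s)) has_integral (t powr (1 - s) / (1 - s))) {-t..0}" by simp
  hence h2: "((\<lambda>x. \<bar>x\<bar> powr (-s)) has_integral (t powr (1 - s) / (1 - s))) {-t..0}"
    by (rule has_integral_eq[rotated]) auto
  have "((\<lambda>x. \<bar>x\<bar> powr (-s)) has_integral (t powr (1 - s) / (1 - s) + t powr (1 - s) / (1 - s))) {-t..t}"
    by (rule has_integral_combine[OF _ _ h2 h1']) (use t in auto)
  hence h3: "((\<lambda>x. \<bar>x\<bar> powr (-s)) has_integral (2 * t powr (1 - s) / (1 - s))) {-t..t}" by simp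
  have e: "(\<lambda>x. indicator {-t..t} x * \<bar>x\<bar> powr (-s)) = (\<lambda>x. if x \<in> {-t..t} then \<bar>x\<bar> powr (-s) else 0)"
    by (auto simp: indicator_def fun_eq_iff)
  have "((\<lambda>x. indicator {-t..t} x * \<bar>x\<bar> powr (-s)) has_integral (2 * t powr (1 - s) / (1 - s))) UNIV"
    unfolding e has_integral_restrict_UNIV by (rule h3)
  hence "integral\<^sup>N lborel (\<lambda>x. indicator {-t..t} x * \<bar>x\<bar> powr (-s)) = 2 * t powr (1 - s) / (1 - s)"
    by (intro nn_integral_has_integral_lborel) auto
  thus ?thesis by simp
qed

lemma int_sing:
  fixes s t a :: real
  assumes s: "0 < s" "s < 1" and t: "0 < t"
  shows "(\<integral>\<^sup>+ r. ennreal (indicator {-t..t} (r - a) * \<bar>r - a\<bar> powr (-s)) \<partial>lborel)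
         = ennreal (2 * t powr (1 - s) / (1 - s))"
proof -
  have "(\<integral>\<^sup>+ x. ennreal (indicator {-t..t} x * \<bar>x\<bar> powr (-s)) \<partial>lborel)
     = (\<integral>\<^sup>+ r. ennreal (indicator {-t..t} (r - a) * \<bar>r - a\<bar> powr (-s)) \<partial>lborel)"
    using nn_integral_real_affine[of "\<lambda>x. ennreal (indicator {-t..t} x * \<bar>x\<bar> powr (-s))" 1 "-a"] by simp
  thus ?thesis using int_sing0[OF s t] by simp
qed

lemma bathtub:
  fixes s t a b :: real and \<rho> :: "real \<Rightarrow> real"
  assumes s: "0 < s" "s < 1" and t: "0 < t" and b: "0 \<le> b"
    and nn: "\<And>r. 0 \<le> \<rho> r" and int: "integrable lborel \<rho>"
    and bd: "AE r in lborel. \<rho> r \<le> b"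
  shows "(\<integral>\<^sup>+ r. ennreal (\<bar>r - a\<bar> powr (-s) * \<rho> r) \<partial>lborel)
     \<le> ennreal (t powr (-s) * (\<integral>r. \<rho> r \<partial>lborel) + 2 * t powr (1 - s) / (1 - s) * b)"
proof -
  have [measurable]: "\<rho> \<in> borel_measurable borel" using int by (simp add: borel_measurable_integrable)
  have "(\<integral>\<^sup>+ r. ennreal (\<bar>r - a\<bar> powr (-s) * \<rho> r) \<partial>lborel)
     \<le> (\<integral>\<^sup>+ r. ennreal (t powr (-s) * \<rho> r) + ennreal b * ennreal (indicator {-t..t} (r - a) * \<bar>r - a\<bar> powr (-s)) \<partial>lborel)"
  proof (rule nn_integral_mono_AE)
    show "AE r in lborel. ennreal (\<bar>r - a\<bar> powr (-s) * \<rho> r) \<le> ennreal (t powr (-s) * \<rho> r) + ennreal b * ennreal (indicator {-t..t} (r - a) * \<bar>r - a\<bar> powr (-s))"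
      using bd
    proof eventually_elim
      case (elim r)
      have "\<bar>r - a\<bar> powr (-s) * \<rho> r \<le> t powr (-s) * \<rho> r + b * (indicator {-t..t} (r - a) * \<bar>r - a\<bar> powr (-s))"
      proof (cases "\<bar>r - a\<bar> \<le> t")
        case True
        have "\<bar>r - a\<bar> powr (-s) * \<rho> r \<le> \<bar>r - a\<bar> powr (-s) * b"
          by (rule mult_left_mono) (use elim in auto)
        moreover have "0 \<le> t powr (-s) * \<rho> r" using nn by simp
        ultimately show ?thesis using True by (auto simp: indicator_def algebra_simps)
      next
        case False
        have "\<bar>r - a\<bar> powr (-s) \<le> t powr (-s)"
          by (rule powr_mono2') (use False s t in auto)
        hence "\<bar>r - a\<bar> powr (-s) * \<rho> r \<le> t powr (-s) * \<rho> r"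
          by (rule mult_right_mono) (use nn in auto)
        moreover have "0 \<le> b * (indicator {-t..t} (r - a) * \<bar>r - a\<bar> powr (-s))" using b by simp
        ultimately show ?thesis by linarith
      qed
      thus ?case using b nn
        by (simp add: ennreal_plus[symmetric] ennreal_mult[symmetric] del: ennreal_plus)
    qed
  qed
  also have "\<dots> = (\<integral>\<^sup>+ r. ennreal (t powr (-s) * \<rho> r) \<partial>lborel) + ennreal b * (\<integral>\<^sup>+ r. ennreal (indicator {-t..t} (r - a) * \<bar>r - a\<bar> powr (-s)) \<partial>lborel)"
    by (subst nn_integral_add) (auto simp: nn_integral_cmult)
  also have "(\<integral>\<^sup>+ r. ennreal (t powr (-s) * \<rho> r) \<partial>lborel) = ennreal (t powr (-s)) * (\<integral>\<^sup>+ r. ennreal (\<rho> r) \<partial>lborel)"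
    by (subst nn_integral_cmult[symmetric]) (auto simp: ennreal_mult nn)
  also have "(\<integral>\<^sup>+ r. ennreal (\<rho> r) \<partial>lborel) = ennreal (\<integral>r. \<rho> r \<partial>lborel)"
    by (rule nn_integral_eq_integral) (use int nn in auto)
  also note int_sing[OF s t, of a]
  finally show ?thesis using b s t nn
    by (simp add: ennreal_plus[symmetric] ennreal_mult[symmetric] integral_nonneg_AE mult_ac del: ennreal_plus)
qed

lemma linprod:
  fixes a b :: "'i \<Rightarrow> 'a::comm_ring_1"
  assumes "finite I"
  shows "degree (\<Prod>i\<in>I. [:a i, b i:]) \<le> card I \<and> coeff (\<Prod>i\<in>I. [:a i, b i:]) (card I) = (\<Prod>i\<in>I. b i)"
  using assms
proof (induction I rule: finite_induct)
  case empty
  then show ?case by simp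
next
  case (insert x F)
  let ?Q = "\<Prod>i\<in>F. [:a i, b i:]"
  have d: "degree ([:a x, b x:] * ?Q) \<le> Suc (card F)"
  proof -
    have "degree [:a x, b x:] \<le> 1" using degree_pCons_le[of "a x" "[:b x:]"] by simp
    thus ?thesis using degree_mult_le[of "[:a x, b x:]" ?Q] insert.IH by linarith
  qed
  have z: "coeff ?Q (Suc (card F)) = 0"
    using insert.IH by (intro coeff_eq_0) auto
  have "coeff ([:a x, b x:] * ?Q) (Suc (card F)) = b x * coeff ?Q (card F)"
    using z by (simp add: mult_pCons_left)
  then show ?case using insert d by simp
qed

lemma det_poly:
  fixes A V :: "'a::comm_ring_1 ^ 'n ^ 'n"
  obtains P where "degree P \<le> CARD('n)" "coeff P CARD('n) = det V"
    "\<And>c. poly P c = det (\<chi> i j. A$i$j + c * V$i$j)"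
proof -
  define P where "P = (\<Sum>p\<in>{p. p permutes (UNIV::'n set)}. smult (of_int (sign p)) (\<Prod>i\<in>UNIV. [:A$i$p i, V$i$p i:]))"
  have "degree P \<le> CARD('n)"
    unfolding P_def
  proof (intro degree_sum_le)
    fix p assume "p \<in> {p. p permutes (UNIV::'n set)}"
    show "degree (smult (of_int (sign p)) (\<Prod>i\<in>UNIV. [:A$i$p i, V$i$p i:])) \<le> CARD('n)"
      using linprod[of "UNIV::'n set" "\<lambda>i. A$i$p i" "\<lambda>i. V$i$p i"]
      by (auto intro: order.trans[OF degree_smult_le])
  qed simp
  moreover have "coeff P CARD('n) = det V"
    unfolding P_def det_def coeff_sum coeff_smult
    by (intro sum.cong refl) (simp add: linprod[of "UNIV::'n set", THEN conjunct2])
  moreover have "poly P c = det (\<chi> i j. A$i$j + c * V$i$j)" for c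
    unfolding P_def det_def by (simp add: poly_sum poly_prod algebra_simps)
  ultimately show ?thesis using that by blast
qed

lemma Fopt:
  fixes a b s t :: real
  assumes a: "0 < a" and b: "0 < b" and s: "0 < s" "s < 1" and t: "t = s * a / (2 * b)"
  shows "t powr (-s) * a + 2 * t powr (1 - s) / (1 - s) * b
       = a powr (1 - s) * b powr s * (2 powr s * s powr (- s) / (1 - s))"
proof -
  have tp: "0 < t" using a b s t by simp
  have "t powr (1 - s) = t powr (-s) * t" using tp powr_add[of t 1 "-s"] by simp
  hence e1: "t powr (-s) * a + 2 * t powr (1 - s) / (1 - s) * b = t powr (-s) * (a + 2 * t * b / (1 - s))"
    by (simp add: algebra_simps)
  have e1': "a + 2 * t * b / (1 - s) = a / (1 - s)" using s b t by (simp add: field_simps)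
  have e2: "t powr (-s) = s powr (-s) * a powr (-s) * 2 powr s * b powr s"
  proof -
    have "ln (t powr (-s)) = ln (s powr (-s) * a powr (-s) * 2 powr s * b powr s)"
      using a b s tp unfolding t by (simp add: ln_mult ln_div algebra_simps)
    moreover have "0 < t powr (-s)" "0 < s powr (-s) * a powr (-s) * 2 powr s * b powr s"
      using a b s tp by auto
    ultimately show ?thesis using ln_inj_iff by blast
  qed
  have e: "t powr (-s) * a + 2 * t powr (1 - s) / (1 - s) * b
     = s powr (-s) * (a powr (-s) * a) * 2 powr s * b powr s / (1 - s)"
  proof -
    have "t powr (-s) * a + 2 * t powr (1 - s) / (1 - s) * b = t powr (-s) * (a / (1 - s))"
      by (simp only: e1 e1')
    also have "\<dots> = s powr (-s) * (a powr (-s) * a) * 2 powr s * b powr s / (1 - s)"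
      unfolding e2 by simp
    finally show ?thesis .
  qed
  have aa: "a powr (-s) * a = a powr (1 - s)" using a powr_add[of a 1 "-s"] by simp
  show ?thesis unfolding e aa by simp
qed

lemma Young_part:
  fixes a b s l :: real
  assumes a: "0 < a" and b: "0 < b" and s: "0 < s" "s < 1" and l: "0 < l"
  shows "a powr (1 - s) * b powr s * (2 powr s * s powr (- s) / (1 - s))
      \<le> l powr (-s) * a + 2 * l powr (1 - s) / (1 - s) * b"
proof -
  define X where "X = l powr (-s) * a / (1 - s)"
  define Y where "Y = 2 * l powr (1 - s) * b / s / (1 - s)"
  have X: "0 < X" and Y: "0 < Y" using a b s l by (auto simp: X_def Y_def)
  have "X powr (1 - s) * Y powr s \<le> (1 - s) * X + s * Y"
    by (rule Youngs_inequality_0) (use s X Y in auto)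
  also have "(1 - s) * X = l powr (-s) * a" using s by (simp add: X_def)
  also have "s * Y = 2 * l powr (1 - s) / (1 - s) * b" using s by (simp add: Y_def field_simps)
  also have "X powr (1 - s) * Y powr s = a powr (1 - s) * b powr s * (2 powr s * s powr (- s) / (1 - s))"
  proof -
    have lss: "ln (s - s * s) = ln s + ln (1 - s)" using s ln_mult[of s "1 - s"] by (simp add: algebra_simps)
    have "ln (X powr (1 - s) * Y powr s) = ln (a powr (1 - s) * b powr s * (2 powr s * s powr (- s) / (1 - s)))"
      using X Y a b s l
      by (simp add: ln_mult ln_div ln_powr X_def Y_def algebra_simps lss)
    thus ?thesis using X Y a b s by simp
  qed
  finally show ?thesis .
qed
lemma not_AE_False_lborel: "\<not> (AE x in (lborel::real measure). False)"
  using ae_filter_eq_bot_iff[of "lborel::real measure"] trivial_limit_def by force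

theorem lemma3p2:
  fixes A V :: "complex ^ 'n ^ 'n"
    and \<rho> :: "real \<Rightarrow> real"
    and s lam :: real
  assumes "invertible V"
    and "\<And>r. 0 \<le> \<rho> r"
    and "integrable lborel \<rho>"
    and "esssup lborel (\<lambda>x. ereal \<bar>\<rho> x\<bar>) < \<infinity>"
    and "0 < s" and "s < 1"
    and "0 < lam"
  shows "(\<integral>\<^sup>+ r. ennreal (cmod (det (A + r *\<^sub>R V)) powr (- s / real CARD('n)) * \<rho> r) \<partial>lborel)
           \<le> ennreal (cmod (det V) powr (- s / real CARD('n)) * l1_norm \<rho> powr (1 - s)
                      * linf_norm \<rho> powr s * (2 powr s * s powr (- s) / (1 - s)))
    \<and> cmod (det V) powr (- s / real CARD('n)) * l1_norm \<rho> powr (1 - s)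
                      * linf_norm \<rho> powr s * (2 powr s * s powr (- s) / (1 - s))
      \<le> cmod (det V) powr (- s / real CARD('n)) *
         (lam powr (- s) * l1_norm \<rho> + 2 * lam powr (1 - s) / (1 - s) * linf_norm \<rho>)"
proof -
  note nn = assms(2) and int = assms(3) and s = assms(5,6)
  have meas[measurable]: "\<rho> \<in> borel_measurable borel" using int by (simp add: borel_measurable_integrable)
  define c where "c = cmod (det V)"
  have dV: "det V \<noteq> 0" using assms(1) invertible_det_nz by blast
  hence c0: "0 < c" unfolding c_def by simp
  obtain P where P1: "degree P \<le> CARD('n)" and P2: "coeff P CARD('n) = det V"
     and P3: "\<And>z. poly P z = det (\<chi> i j. A$i$j + z * V$i$j)"
    by (rule det_poly[of V A]) auto
  have degP: "degree P = CARD('n)" using P1 P2 dV le_degree[of P "CARD('n)"] by fastforce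
  have lcP: "lead_coeff P = det V" using degP P2 by simp
  obtain root where R: "smult (lead_coeff P) (\<Prod>i<degree P. [:-root i, 1:]) = P"
    using complex_poly_decompose' by blast
  have detx: "det (A + x *\<^sub>R V) = det V * (\<Prod>i<CARD('n). (complex_of_real x - root i))" for x :: real
  proof -
    have "A + x *\<^sub>R V = (\<chi> i j. A$i$j + complex_of_real x * V$i$j)"
    proof -
      have "(x *\<^sub>R V)$i$j = complex_of_real x * V$i$j" for i j
        using scaleR_conv_of_real[of x "V$i$j"] by simp
      thus ?thesis by (simp add: vec_eq_iff)
    qed
    hence "det (A + x *\<^sub>R V) = poly P (complex_of_real x)" by (simp add: P3)
    also have "\<dots> = poly (smult (lead_coeff P) (\<Prod>i<degree P. [:-root i, 1:])) (complex_of_real x)"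
      by (simp add: R)
    also have "\<dots> = det V * (\<Prod>i<CARD('n). (complex_of_real x - root i))"
      unfolding lcP degP by (simp add: poly_prod P2)
    finally show ?thesis .
  qed
  define a where "a i = Re (root i)" for i
  define K where "K = c powr (- s / real CARD('n))"
  have K0: "0 < K" using c0 by (simp add: K_def)
  have pw: "cmod (det (A + x *\<^sub>R V)) powr (- s / real CARD('n))
      \<le> K * (\<Sum>i<CARD('n). \<bar>x - a i\<bar> powr (-s) / real CARD('n))"
    if x: "x \<notin> a ` {..<CARD('n)}" for x
  proof (cases "det (A + x *\<^sub>R V) = 0")
    case True
    then show ?thesis using K0 by (simp add: sum_nonneg)
  next
    case False
    define d where "d i = cmod (complex_of_real x - root i)" for i
    have dpos: "0 < d i" if "i < CARD('n)" for i
      using False detx[of x] that unfolding d_def by auto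
    have da: "\<bar>x - a i\<bar> \<le> d i" for i
      unfolding d_def a_def using abs_Re_le_cmod[of "complex_of_real x - root i"] by simp
    have xa: "0 < \<bar>x - a i\<bar>" if "i < CARD('n)" for i using x that by auto
    have "cmod (det (A + x *\<^sub>R V)) = c * (\<Prod>i<CARD('n). d i)"
      by (simp add: detx c_def d_def norm_mult prod_norm)
    hence e1: "cmod (det (A + x *\<^sub>R V)) powr (- s / real CARD('n)) = K * (\<Prod>i<CARD('n). d i powr (- s / real CARD('n)))"
      by (simp add: K_def powr_mult prod_powr_distrib)
    have "(\<Prod>i<CARD('n). d i powr (- s / real CARD('n))) = (\<Prod>i<CARD('n). d i powr (-s)) powr (1 / real CARD('n))"
      by (simp add: prod_powr_distrib powr_powr)
    also have "\<dots> \<le> (\<Sum>i<CARD('n). d i powr (-s) / real CARD('n))"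
      using arith_geom_mean[of "{..<CARD('n)}" "\<lambda>i. d i powr (-s)"] by (simp add: lessThan_empty_iff)
    also have "\<dots> \<le> (\<Sum>i<CARD('n). \<bar>x - a i\<bar> powr (-s) / real CARD('n))"
      by (intro sum_mono divide_right_mono powr_mono2') (use da xa s in auto)
    finally show ?thesis unfolding e1 using K0 by (simp add: mult_left_mono)
  qed
  define E where "E = esssup lborel (\<lambda>x. ereal \<bar>\<rho> x\<bar>)"
  define b where "b = linf_norm \<rho>"
  define a1 where "a1 = l1_norm \<rho>"
  have AEE: "AE x in lborel. ereal \<bar>\<rho> x\<bar> \<le> E" unfolding E_def by (rule esssup_AE)
  have Efin: "E \<noteq> -\<infinity>"
  proof
    assume "E = -\<infinity>"
    hence "AE x in (lborel::real measure). False" using AEE by (auto elim: eventually_mono)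
    thus False using not_AE_False_lborel by blast
  qed
  have bE: "E = ereal b" using Efin assms(4) unfolding b_def linf_norm_def E_def[symmetric] by (cases E) auto
  have bd: "AE x in lborel. \<rho> x \<le> b" using AEE unfolding bE by (auto elim!: eventually_mono)
  have b0: "0 \<le> b"
  proof (rule ccontr)
    assume "\<not> 0 \<le> b"
    hence "AE x in (lborel::real measure). False" using bd nn by (auto elim: eventually_mono intro: order.trans)
    thus False using not_AE_False_lborel by blast
  qed
  have a1e: "a1 = (\<integral>r. \<rho> r \<partial>lborel)" unfolding a1_def l1_norm_def using nn by simp
  have a1nn: "0 \<le> a1" unfolding a1e using nn by simp
  have bound: "(\<integral>\<^sup>+ r. ennreal (cmod (det (A + r *\<^sub>R V)) powr (- s / real CARD('n)) * \<rho> r) \<partial>lborel)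
      \<le> ennreal (K * (t powr (-s) * a1 + 2 * t powr (1 - s) / (1 - s) * b))" if t: "0 < t" for t
  proof -
    let ?F = "t powr (-s) * a1 + 2 * t powr (1 - s) / (1 - s) * b"
    have F0: "0 \<le> ?F" using a1nn b0 s t by simp
    have "(\<integral>\<^sup>+ r. ennreal (cmod (det (A + r *\<^sub>R V)) powr (- s / real CARD('n)) * \<rho> r) \<partial>lborel)
       \<le> (\<integral>\<^sup>+ r. (\<Sum>i<CARD('n). ennreal (K / real CARD('n)) * ennreal (\<bar>r - a i\<bar> powr (-s) * \<rho> r)) \<partial>lborel)"
    proof (rule nn_integral_mono_AE)
      have "AE r in lborel. r \<notin> a ` {..<CARD('n)}"
        by (rule AE_not_in[OF finite_imp_null_set_lborel]) simp
      then show "AE r in lborel. ennreal (cmod (det (A + r *\<^sub>R V)) powr (- s / real CARD('n)) * \<rho> r)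
         \<le> (\<Sum>i<CARD('n). ennreal (K / real CARD('n)) * ennreal (\<bar>r - a i\<bar> powr (-s) * \<rho> r))"
      proof eventually_elim
        case (elim r)
        have "cmod (det (A + r *\<^sub>R V)) powr (- s / real CARD('n)) * \<rho> r
            \<le> K * (\<Sum>i<CARD('n). \<bar>r - a i\<bar> powr (-s) / real CARD('n)) * \<rho> r"
          using pw[OF elim] nn by (intro mult_right_mono) auto
        also have "\<dots> = (\<Sum>i<CARD('n). K / real CARD('n) * (\<bar>r - a i\<bar> powr (-s) * \<rho> r))"
          by (simp add: sum_distrib_left sum_distrib_right mult.assoc)
        finally have "ennreal (cmod (det (A + r *\<^sub>R V)) powr (- s / real CARD('n)) * \<rho> r)
           \<le> ennreal (\<Sum>i<CARD('n). K / real CARD('n) * (\<bar>r - a i\<bar> powr (-s) * \<rho> r))"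
          by (rule ennreal_leI)
        also have "\<dots> = (\<Sum>i<CARD('n). ennreal (K / real CARD('n) * (\<bar>r - a i\<bar> powr (-s) * \<rho> r)))"
          by (rule sum_ennreal[symmetric]) (use K0 nn in auto)
        also have "\<dots> = (\<Sum>i<CARD('n). ennreal (K / real CARD('n)) * ennreal (\<bar>r - a i\<bar> powr (-s) * \<rho> r))"
          by (intro sum.cong refl ennreal_mult) (use K0 nn in auto)
        finally show ?case .
      qed
    qed
    also have "\<dots> = (\<Sum>i<CARD('n). ennreal (K / real CARD('n)) * (\<integral>\<^sup>+ r. ennreal (\<bar>r - a i\<bar> powr (-s) * \<rho> r) \<partial>lborel))"
      by (subst nn_integral_sum) (auto simp: nn_integral_cmult)
    also have "\<dots> \<le> (\<Sum>i<CARD('n). ennreal (K / real CARD('n)) * ennreal ?F)"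
    proof (intro sum_mono mult_left_mono)
      fix i
      show "(\<integral>\<^sup>+ r. ennreal (\<bar>r - a i\<bar> powr (-s) * \<rho> r) \<partial>lborel) \<le> ennreal ?F"
        using bathtub[OF s t b0 nn int bd, of "a i"] unfolding a1e by simp
    qed simp
    also have "\<dots> = (\<Sum>i<CARD('n). ennreal (K / real CARD('n) * ?F))"
      by (intro sum.cong refl ennreal_mult[symmetric]) (use K0 F0 in auto)
    also have "\<dots> = ennreal (\<Sum>i<CARD('n). K / real CARD('n) * ?F)"
      by (rule sum_ennreal) (use K0 F0 in auto)
    also have "(\<Sum>i<CARD('n). K / real CARD('n) * ?F) = K * ?F"
      by simp
    finally show ?thesis .
  qed
  show ?thesis
  proof (cases "a1 = 0")
    case True
    have z: "AE x in lborel. \<rho> x = 0"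
      using integral_nonneg_eq_0_iff_AE[of lborel \<rho>] int nn True a1e by simp
    have "(\<integral>\<^sup>+ r. ennreal (cmod (det (A + r *\<^sub>R V)) powr (- s / real CARD('n)) * \<rho> r) \<partial>lborel)
         \<le> (\<integral>\<^sup>+ r. (0::ennreal) \<partial>(lborel::real measure))"
      by (rule nn_integral_mono_AE) (use z in \<open>auto elim: eventually_mono\<close>)
    hence c1: "(\<integral>\<^sup>+ r. ennreal (cmod (det (A + r *\<^sub>R V)) powr (- s / real CARD('n)) * \<rho> r) \<partial>lborel) \<le> ennreal x" for x
      by (simp add: order.trans)
    have "0 \<le> K * (lam powr (- s) * a1 + 2 * lam powr (1 - s) / (1 - s) * b)"
      using K0 a1nn b0 s by simp
    thus ?thesis using c1[of 0] True s unfolding a1_def b_def K_def c_def by simp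
  next
    case False
    hence a1p: "0 < a1" using a1nn by simp
    have bp: "0 < b"
    proof (rule ccontr)
      assume "\<not> 0 < b"
      hence "AE x in lborel. \<rho> x = 0" using bd nn b0 by (auto elim: eventually_mono intro: antisym)
      hence "(\<integral>r. \<rho> r \<partial>lborel) = 0" using integral_nonneg_eq_0_iff_AE[of lborel \<rho>] int nn by simp
      thus False using a1p a1e by simp
    qed
    define t where "t = s * a1 / (2 * b)"
    have t0: "0 < t" using s a1p bp by (simp add: t_def)
    have c1: "(\<integral>\<^sup>+ r. ennreal (cmod (det (A + r *\<^sub>R V)) powr (- s / real CARD('n)) * \<rho> r) \<partial>lborel)
       \<le> ennreal (K * (a1 powr (1 - s) * b powr s * (2 powr s * s powr (- s) / (1 - s))))"
      using bound[OF t0] Fopt[OF a1p bp s t_def] by simp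
    have c2: "K * (a1 powr (1 - s) * b powr s * (2 powr s * s powr (- s) / (1 - s)))
        \<le> K * (lam powr (- s) * a1 + 2 * lam powr (1 - s) / (1 - s) * b)"
      by (rule mult_left_mono[OF Young_part[OF a1p bp s assms(7)]]) (use K0 in simp)
    show ?thesis using c1 c2 unfolding a1_def b_def K_def c_def by (simp add: mult_ac)
  qed
qed

end
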